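(* Consider the setting in the context. Let $p\in[\bar h]$, $S=S_{\lfloor p/(\bar h-\delta+1)\rfloor}$ (so $i_p\in S$ and $|S|=\bar h-\delta+1$), $b\in[1,u]$, and let $\mathbf{C}$ be any codeword. Then the set of values $\{\sum_{g=0}^{u-1}\theta^{gm}c_{i_pu+g,a}: a\in[l],\ m\in[b]\}$ is determined by the data $\{\sum_{g=0}^{u-1}\theta^{gm}c_{i_pu+g,a},\ \sum_{g=0}^{u-1}\theta^{gm}c_{i_pu+g,a(i_p,a_{i_p}\oplus1)}: a\in[l],\ a|_S\in\mathcal V_0,\ m\in[b]\}$ together with $\{H_{i,i_p}(a,m)=\sum_{g=0}^{u-1}\theta^{gm}c_{i_pu+g,a}+\sum_{g=0}^{u-1}\theta^{gm}c_{i_pu+g,a(i,a_i\oplus1)}: i\in S\setminus\{i_p\},\ a\in[l],\ a|_S\in\mathcal V_0,\ m\in[b]\}$.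
   Context: $[N]=\{0,\dots,N-1\}$. Integers: $\bar n$, $u>1$, $\bar k$, $0\le v<u$, $n=\bar nu$, $k=\bar ku+v$, $r=n-k$; $\bar d=\bar k+1$; $\bar h,\delta$ with $\delta\in[1,\bar h)$, $\bar h-\delta+2=2^{\bar m}$ for some integer $\bar m\ge1$, and $(\bar h-\delta+1)\mid\bar h$. $l=2^{\bar n}$. $\mathbb{F}$ is a finite field with $|\mathbb{F}|\ge2n+1$ containing an element $\theta$ of multiplicative order $u$; $\xi$ is a primitive element and $\lambda_{i,j}=\xi^{2i+j}$ for $i\in[\bar n]$, $j\in\{0,1\}$. For $a\in[l]$ write $a=(a_{\bar n-1},\dots,a_0)$ in binary, and $a(i,j)$ is $a$ with its $i$-th bit replaced by $j$; $\oplus$ is addition mod 2. The code $\mathbf{C}$ consists of all $(c_{iu+g,a})_{i\in[\bar n],g\in[u],a\in[l]}$ over $\mathbb{F}$ with $\sum_{i=0}^{\bar n-1}\sum_{g=0}^{u-1}\theta^{gt}\lambda_{i,a_i}^tc_{iu+g,a}=0$ for all $t\in[r]$, $a\in[l]$. $\mathcal F=\{i_0,\dots,i_{\bar h-1}\}\subseteq[\bar n]$ are $\bar h$ distinct racks. $\mathcal V_0\subseteq\mathbb{F}_2^{2^{\bar m}-1}$ is the binary Hamming code of length $2^{\bar m}-1$, i.e. the kernel of a $\bar m\times(2^{\bar m}-1)$ binary matrix whose columns are all the nonzero vectors of $\mathbb{F}_2^{\bar m}$. For $q\in[\bar h/(\bar h-\delta+1))$, $S_q=\{i_{q'}: q'\in[q(\bar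 h-\delta+1),(q+1)(\bar h-\delta+1))\}$. For $J=\{j_0<\dots<j_{e-1}\}\subseteq[\bar n]$, the puncturing $a|_J=(a_{j_{e-1}},\dots,a_{j_0})\in\mathbb{F}_2^{e}$. *)

theory Defs
  imports Main
begin

text \<open>i-th binary digit of a (a = (a_{n-1},...,a_0)).\<close>
definition bitv :: "nat \<Rightarrow> nat \<Rightarrow> nat" where
  "bitv a i = a div 2 ^ i mod 2"

definition repl_bit :: "nat \<Rightarrow> nat \<Rightarrow> nat \<Rightarrow> nat" where
  "repl_bit a i j = a - bitv a i * 2 ^ i + j * 2 ^ i"

definition flip_bit :: "nat \<Rightarrow> nat \<Rightarrow> nat" where
  "flip_bit a i = repl_bit a i ((bitv a i + 1) mod 2)"

definition lam :: "'a::field \<Rightarrow> nat \<Rightarrow> nat \<Rightarrow> 'a" where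
  "lam xi i j = xi ^ (2 * i + j)"

text \<open>Membership in the code C; c (i*u+g) a is the symbol c_{iu+g,a}.\<close>
definition in_code :: "nat \<Rightarrow> nat \<Rightarrow> nat \<Rightarrow> 'a::field \<Rightarrow> 'a \<Rightarrow> (nat \<Rightarrow> nat \<Rightarrow> 'a) \<Rightarrow> bool" where
  "in_code nb u r theta xi c \<longleftrightarrow>
     (\<forall>t<r. \<forall>a<2 ^ nb.
        (\<Sum>i<nb. \<Sum>g<u. theta ^ (g * t) * (lam xi i (bitv a i)) ^ t * c (i * u + g) a) = 0)"

text \<open>Puncturing a|_J: coordinate t (0-based) is a_{j_t}, where j_0 < ... < j_{e-1}.\<close>
definition puncture :: "nat set \<Rightarrow> nat \<Rightarrow> nat \<Rightarrow> nat" where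
  "puncture J a = (\<lambda>t. bitv a (sorted_list_of_set J ! t))"

text \<open>Binary Hamming code of length 2^mb - 1: kernel of the mb x (2^mb-1) binary matrix whose
  t-th column is the binary expansion of col t; col is a bijection onto the nonzero vectors
  (numbers 1..2^mb-1). Vectors are 0/1-valued functions on {0..<2^mb-1}.\<close>
definition hamming_code :: "nat \<Rightarrow> (nat \<Rightarrow> nat) \<Rightarrow> (nat \<Rightarrow> nat) set" where
  "hamming_code mb col = {x. \<forall>s<mb. even (\<Sum>t<2 ^ mb - 1. x t * bitv (col t) s)}"

definition S_set :: "(nat \<Rightarrow> nat) \<Rightarrow> nat \<Rightarrow> nat \<Rightarrow> nat \<Rightarrow> nat set" where
  "S_set ind hb delta q = ind ` {q * (hb - delta + 1) ..< (q + 1) * (hb - delta + 1)}"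

definition nodesum :: "nat \<Rightarrow> 'a::field \<Rightarrow> (nat \<Rightarrow> nat \<Rightarrow> 'a) \<Rightarrow> nat \<Rightarrow> nat \<Rightarrow> nat \<Rightarrow> 'a" where
  "nodesum u theta c i m a = (\<Sum>g<u. theta ^ (g * m) * c (i * u + g) a)"

end

theory Submission
  imports Defs
begin

lemma bitv_bit: "bitv a i = of_bool (bit a i)"
  unfolding bitv_def by (simp add: bit_iff_odd odd_iff_mod_2_eq_one)

lemma flip_eq: "Defs.flip_bit a j = Bit_Operations.flip_bit j a"
proof (cases "bit a j")
  case True
  have "Bit_Operations.set_bit j (unset_bit j a) = a"
    using True by (auto intro!: bit_eqI simp: bit_set_bit_iff bit_unset_bit_iff)
  moreover have "Bit_Operations.set_bit j (unset_bit j a) = unset_bit j a + 2 ^ j"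
    by (simp add: set_bit_eq bit_unset_bit_iff)
  ultimately have "unset_bit j a = a - 2 ^ j" by linarith
  then show ?thesis using True unfolding Defs.flip_bit_def repl_bit_def bitv_bit
    by (simp add: flip_bit_eq_if)
next
  case False
  then show ?thesis unfolding Defs.flip_bit_def repl_bit_def bitv_bit
    by (simp add: flip_bit_eq_if set_bit_eq)
qed

lemma bitv_flip: "bitv (Defs.flip_bit a j) i = (if i = j then 1 - bitv a i else bitv a i)"
  unfolding flip_eq bitv_bit by (auto simp: bit_flip_bit_iff)

lemma flip_flip: "Defs.flip_bit (Defs.flip_bit a j) j = a"
  unfolding flip_eq by (rule bit_eqI) (auto simp: bit_flip_bit_iff)

lemma flip_less: "a < 2 ^ n \<Longrightarrow> j < n \<Longrightarrow> Defs.flip_bit a j < 2 ^ n"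
proof -
  assume a: "a < 2 ^ n" and j: "j < n"
  have "take_bit n (Bit_Operations.flip_bit j a) = Bit_Operations.flip_bit j a"
    using a j by (simp add: take_bit_flip_bit_eq take_bit_nat_eq_self)
  then show ?thesis unfolding flip_eq by (metis take_bit_nat_eq_self_iff)
qed

lemma exists_bits: "\<exists>w<2^mb. \<forall>s<mb. bitv w s = d s" if "\<forall>s. d s \<le> 1" for d :: "nat \<Rightarrow> nat"
  using that
proof (induction mb arbitrary: d)
  case 0 then show ?case by auto
next
  case (Suc mb)
  from Suc.IH[of "\<lambda>s. d (Suc s)"] Suc.prems obtain w where w: "w < 2^mb" "\<forall>s<mb. bitv w s = d (Suc s)" by auto
  have "d 0 + 2 * w < 2 ^ Suc mb" using w(1) Suc.prems[rule_format, of 0] by simp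
  moreover have "\<forall>s<Suc mb. bitv (d 0 + 2 * w) s = d s"
  proof (intro allI impI)
    fix s assume "s < Suc mb"
    show "bitv (d 0 + 2 * w) s = d s"
    proof (cases s)
      case 0 then show ?thesis using Suc.prems[rule_format, of 0] by (auto simp: bitv_def)
    next
      case (Suc s')
      have "(d 0 + 2 * w) div 2 ^ Suc s' = w div 2 ^ s'"
      proof -
        have "(d 0 + 2 * w) div 2 = w" using Suc.prems[rule_format, of 0] by simp
        then show ?thesis by (simp add: div_mult2_eq)
      qed
      then show ?thesis using w(2) \<open>s < Suc mb\<close> Suc by (auto simp: bitv_def)
    qed
  qed
  ultimately show ?case by blast
qed

lemma ham_cong: "x \<in> hamming_code mb col \<Longrightarrow> (\<forall>t<2^mb-1. x t = y t) \<Longrightarrow> y \<in> hamming_code mb col"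
proof -
  assume h: "x \<in> hamming_code mb col" and e: "\<forall>t<2^mb-1. x t = y t"
  have "\<And>s. (\<Sum>t<2^mb-1. x t * bitv (col t) s) = (\<Sum>t<2^mb-1. y t * bitv (col t) s)"
    using e by (intro sum.cong) auto
  then show ?thesis using h unfolding hamming_code_def by simp
qed

lemma bitv_le1: "bitv a i \<le> 1" unfolding bitv_def by simp

lemma par: "(X * B + A) mod 2 = B \<Longrightarrow> X \<le> 1 \<Longrightarrow> B \<le> (1::nat) \<Longrightarrow> even ((1 - X) * B + A)"
proof -
  assume h: "(X * B + A) mod 2 = B" "X \<le> 1" "B \<le> 1"
  show ?thesis
  proof (cases "X = 0")
    case True
    then show ?thesis using h by (cases "B = 0") (auto simp: even_iff_mod_2_eq_zero, presburger)
  next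
    case False
    then have "X = 1" using h by auto
    then show ?thesis using h by (cases "B = 0") (auto simp: even_iff_mod_2_eq_zero, presburger)
  qed
qed

lemma cover:
  assumes bij: "bij_betw col {..<2^mb-1} {1..<2^mb}" and x01: "\<forall>t<2^mb-1. x t \<le> 1"
  shows "x \<in> hamming_code mb col \<or> (\<exists>t0<2^mb-1. (\<lambda>t. if t = t0 then 1 - x t else x t) \<in> hamming_code mb col)"
proof -
  define N where "N = (2::nat)^mb - 1"
  define d where "d s = (\<Sum>t<N. x t * bitv (col t) s) mod 2" for s
  obtain w where w: "w < 2^mb" "\<forall>s<mb. bitv w s = d s"
  proof -
    have "\<forall>s. d s \<le> 1" unfolding d_def using less_Suc_eq_le mod_less_divisor by (metis One_nat_def Suc_1 zero_less_Suc)
    then show ?thesis using exists_bits[of d mb] that by blast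
  qed
  show ?thesis
  proof (cases "w = 0")
    case True
    then have "\<forall>s<mb. d s = 0" using w(2) by (auto simp: bitv_def)
    then have "x \<in> hamming_code mb col" unfolding hamming_code_def d_def N_def by auto
    then show ?thesis by blast
  next
    case False
    then have "w \<in> {1..<2^mb}" using w(1) by auto
    then have "w \<in> col ` {..<N}" using bij unfolding bij_betw_def N_def by simp
    then obtain t0 where t0: "t0 < N" "col t0 = w" by auto
    have "(\<lambda>t. if t = t0 then 1 - x t else x t) \<in> hamming_code mb col"
      unfolding hamming_code_def
    proof (intro CollectI allI impI)
      fix s assume s: "s < mb"
      define B where "B = bitv (col t0) s"
      have B: "B = d s" "B \<le> 1" using w(2) s t0(2) B_def bitv_le1[of "col t0" s] by auto
      define A where "A = (\<Sum>t\<in>{..<N} - {t0}. x t * bitv (col t) s)"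
      have fin: "finite {..<N}" "t0 \<in> {..<N}" using t0 by auto
      have e1: "(\<Sum>t<N. x t * bitv (col t) s) = x t0 * B + A"
        unfolding A_def B_def using sum.remove[OF fin, of "\<lambda>t. x t * bitv (col t) s"] by simp
      have e3: "(\<Sum>t\<in>{..<N} - {t0}. (if t = t0 then 1 - x t else x t) * bitv (col t) s) = A"
        unfolding A_def by (rule sum.cong) auto
      have e2: "(\<Sum>t<N. (if t = t0 then 1 - x t else x t) * bitv (col t) s) = (1 - x t0) * B + A"
        unfolding B_def e3[symmetric] using sum.remove[OF fin, of "\<lambda>t. (if t = t0 then 1 - x t else x t) * bitv (col t) s"]
        by simp
      have x0: "x t0 \<le> 1" using x01 t0 N_def by auto
      have "(x t0 * B + A) mod 2 = B" using B e1 d_def by simp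
      then have "even ((1 - x t0) * B + A)" using x0 B(2)
        using par by blast
      then show "even (\<Sum>t<2 ^ mb - 1. (if t = t0 then 1 - x t else x t) * bitv (col t) s)"
        using e2 N_def by simp
    qed
    then show ?thesis using t0 N_def by blast
  qed
qed

theorem lemma5:
  fixes theta xi :: "'a::{field,finite}"
    and nb u kb v n k r hb delta mb p b :: nat
    and ind :: "nat \<Rightarrow> nat"
    and col :: "nat \<Rightarrow> nat"
    and c c' :: "nat \<Rightarrow> nat \<Rightarrow> 'a"
  assumes "u > 1" and "v < u" and "n = nb * u" and "k = kb * u + v" and "r = n - k"
    and "1 \<le> delta" and "delta < hb" and "hb - delta + 2 = 2 ^ mb" and "mb \<ge> 1"
    and "(hb - delta + 1) dvd hb"
    and "card (UNIV :: 'a set) \<ge> 2 * n + 1"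
    and "theta ^ u = 1" and "\<forall>j. 0 < j \<and> j < u \<longrightarrow> theta ^ j \<noteq> 1"
    and "\<forall>x::'a. x \<noteq> 0 \<longrightarrow> (\<exists>j. x = xi ^ j)"
    and "inj_on ind {..<hb}" and "ind ` {..<hb} \<subseteq> {..<nb}"
    and "bij_betw col {..<2 ^ mb - 1} {1..<2 ^ mb}"
    and "p < hb"
    and "1 \<le> b" and "b \<le> u"
    and "in_code nb u r theta xi c" and "in_code nb u r theta xi c'"
    and "\<forall>a<2 ^ nb. puncture (S_set ind hb delta (p div (hb - delta + 1))) a \<in> hamming_code mb col
           \<longrightarrow> (\<forall>m<b.
                 nodesum u theta c (ind p) m a = nodesum u theta c' (ind p) m a
               \<and> nodesum u theta c (ind p) m (flip_bit a (ind p))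
                   = nodesum u theta c' (ind p) m (flip_bit a (ind p))
               \<and> (\<forall>i \<in> S_set ind hb delta (p div (hb - delta + 1)) - {ind p}.
                    nodesum u theta c (ind p) m a + nodesum u theta c (ind p) m (flip_bit a i)
                  = nodesum u theta c' (ind p) m a + nodesum u theta c' (ind p) m (flip_bit a i)))"
  shows "\<forall>a<2 ^ nb. \<forall>m<b. nodesum u theta c (ind p) m a = nodesum u theta c' (ind p) m a"
proof (intro allI impI)
  fix a m :: nat assume a: "a < 2 ^ nb" and m: "m < b"
  define L where "L = hb - delta + 1"
  define q where "q = p div L"
  define S where "S = S_set ind hb delta q"
  note H = assms(23)[folded L_def, folded q_def, folded S_def]
  have L: "L = 2 ^ mb - 1" using assms(8) L_def by simp
  have Lpos: "L > 0" using L_def by simp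
  obtain K where K: "hb = L * K" using assms(10) L_def by (auto elim: dvdE)
  have "q < K" using assms(18) K Lpos unfolding q_def
    by (metis div_less_iff_less_mult mult.commute)
  then have "(q + 1) * L \<le> K * L" by (intro mult_le_mono1) simp
  then have qK: "(q + 1) * L \<le> hb" using K by (simp add: mult.commute)
  have sub: "{q * L ..< (q + 1) * L} \<subseteq> {..<hb}" using qK by auto
  have S_eq: "S = ind ` {q * L ..< (q + 1) * L}" unfolding S_def S_set_def L_def by simp
  have finS: "finite S" using S_eq by simp
  have cardS: "card S = L" unfolding S_eq
    using card_image[OF inj_on_subset[OF assms(15) sub]] by simp
  have Snb: "\<forall>j\<in>S. j < nb" using S_eq sub assms(16) by auto
  define sl where "sl = sorted_list_of_set S"
  have len: "length sl = L" using cardS sl_def by simp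
  have dist: "distinct sl" using sl_def by simp
  have setsl: "set sl = S" using sl_def finS by simp
  define x where "x = puncture S a"
  have x01: "\<forall>t<2^mb-1. x t \<le> 1" unfolding x_def puncture_def using bitv_le1 by auto
  show "nodesum u theta c (ind p) m a = nodesum u theta c' (ind p) m a"
  proof (cases "x \<in> hamming_code mb col")
    case True
    then show ?thesis using H a m x_def by blast
  next
    case False
    then obtain t0 where t0: "t0 < 2^mb-1" and hx: "(\<lambda>t. if t = t0 then 1 - x t else x t) \<in> hamming_code mb col"
      using cover[OF assms(17) x01] by blast
    define j where "j = sl ! t0"
    have jS: "j \<in> S" using t0 len setsl j_def L by auto
    have jnb: "j < nb" using jS Snb by auto
    define a' where "a' = Defs.flip_bit a j"
    have a': "a' < 2 ^ nb" using flip_less[OF a jnb] a'_def by simp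
    have aa: "Defs.flip_bit a' j = a" using a'_def flip_flip by simp
    have "\<forall>t::nat<2^mb-1. (if t = t0 then 1 - x t else x t) = puncture S a' t"
    proof (intro allI impI)
      fix t :: nat assume t: "t < 2^mb-1"
      have "(sl ! t = j) = (t = t0)" unfolding j_def using nth_eq_iff_index_eq[OF dist] t t0 len L by auto
      then show "(if t = t0 then 1 - x t else x t) = puncture S a' t"
        unfolding x_def puncture_def a'_def sl_def[symmetric] bitv_flip by auto
    qed
    then have ha': "puncture S a' \<in> hamming_code mb col" using ham_cong[OF hx] by blast
    have E: "nodesum u theta c (ind p) m a' = nodesum u theta c' (ind p) m a'"
      "nodesum u theta c (ind p) m (Defs.flip_bit a' (ind p)) = nodesum u theta c' (ind p) m (Defs.flip_bit a' (ind p))"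
      "\<forall>i \<in> S - {ind p}. nodesum u theta c (ind p) m a' + nodesum u theta c (ind p) m (Defs.flip_bit a' i)
                  = nodesum u theta c' (ind p) m a' + nodesum u theta c' (ind p) m (Defs.flip_bit a' i)"
      using H a' ha' m by blast+
    show ?thesis
    proof (cases "j = ind p")
      case True
      then show ?thesis using E(2) aa by simp
    next
      case False
      then have "j \<in> S - {ind p}" using jS by auto
      then show ?thesis using E(3) E(1) aa by force
    qed
  qed
qed

end
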